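(* For every $a>0$, $$\int_{a-i\mathbb R}\mathrm B(z,z)^2\,\mathrm dz=0,$$ where the (not absolutely convergent) integral over the vertical line $\operatorname{Re}z=a$ is understood in the distributional (improper) sense.
   Context: $\mathrm B(z,w)=\Gamma(z)\Gamma(w)/\Gamma(z+w)$ is Euler's beta function. On the line $z=a-ix$, $x\in\mathbb R$, one has $|\mathrm B(z,z)^2|=O(|x|^{-1})$, so the integral converges only conditionally. *)

theory Defs
  imports "HOL-Analysis.Analysis"
begin

end

theory Submission
  imports Defs "HOL-Complex_Analysis.Complex_Analysis"
begin


lemma frac_aux:
  fixes a b A B :: real assumes "A > 0" "B > 0" "a*B - b*A \<le> 2*B"
  shows "a/A - b/B \<le> 2/A"
proof -
  have "a/A - b/B = (a*B - b*A)/(A*B)" using assms by (simp add: field_simps)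
  also have "\<dots> \<le> (2*B)/(A*B)" using assms by (intro divide_right_mono) auto
  also have "\<dots> = 2/A" using assms by simp
  finally show ?thesis .
qed

lemma step_poly:
  fixes x t :: real assumes "x > 0"
  shows "2 * ((x + 1/4) / (x^2 + t^2)) \<le> 4 / x^2 + (2*x+1) / ((x+1)^2 + t^2)"
proof -
  have h0: "x^2 + t^2 > 0" using assms by (simp add: add_pos_nonneg)
  have h1: "(x+1)^2 + t^2 > 0" using assms by (simp add: add_pos_nonneg)
  have "(x + 1/4) / (x^2 + t^2) - (x+1/2) / ((x+1)^2 + t^2) \<le> 2 / (x^2+t^2)"
  proof -
    have "(x + 1/4) * ((x+1)^2 + t^2) - (x+1/2) * (x^2 + t^2) \<le> 2 * ((x+1)^2 + t^2)"
    proof -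
      have e1: "(x + 1/4) * ((x+1)^2 + t^2) - (x+1/2) * (x^2 + t^2) = 2*x^2 + 3/2*x + 1/4 - (x^2+t^2)/4"
        by (simp add: power2_eq_square field_simps)
      have e2: "2 * ((x+1)^2 + t^2) = 2*x^2 + 4*x + 2 + 2*t^2" by (simp add: algebra_simps power2_eq_square)
      have "t^2 \<ge> 0" "(x^2+t^2)/4 \<ge> 0" by simp_all
      then show ?thesis unfolding e1 e2 using assms by linarith
    qed
    then show ?thesis using h0 h1 by (intro frac_aux) (auto simp: mult.commute)
  qed
  also have "\<dots> \<le> 2 / x^2" using assms h0 by (intro divide_left_mono) (auto intro: mult_pos_pos)
  finally have f: "(x + 1/4) / (x^2 + t^2) - (x+1/2) / ((x+1)^2 + t^2) \<le> 2 / x^2" .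
  have "2 * ((x+1/2) / ((x+1)^2 + t^2)) = (2 * (x+1/2)) / ((x+1)^2 + t^2)" by (rule times_divide_eq_right)
  moreover have "2 * (x + 1/2) = 2*x+1" by simp
  ultimately have "(2*x+1) / ((x+1)^2 + t^2) = 2 * ((x+1/2) / ((x+1)^2 + t^2))" by simp
  moreover have "4 / x^2 = 2 * (2 / x^2)" by simp
  ultimately show ?thesis using f by linarith
qed

lemma step_ineq:
  fixes x t :: real assumes "x > 0"
  shows "(((x+1/2)^2+t^2)/(x^2+t^2))^2 \<le> exp (4/x^2) * (((x+1)^2+t^2)/(x^2+t^2))"
proof -
  have h0: "x^2 + t^2 > 0" using assms by (simp add: add_pos_nonneg)
  have h1: "(x+1)^2 + t^2 > 0" using assms by (simp add: add_pos_nonneg)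
  define u where "u = (x + 1/4) / (x^2 + t^2)"
  have u0: "u \<ge> 0" using assms h0 by (simp add: u_def)
  have g: "((x+1/2)^2+t^2)/(x^2+t^2) = 1 + u" using h0 by (simp add: u_def field_simps power2_eq_square)
  have l1: "ln (1 + u) \<le> u" using u0 by (rule ln_add_one_self_le_self)
  define y where "y = ((x+1)^2+t^2)/(x^2+t^2)"
  have y0: "y > 0" using h0 h1 by (simp add: y_def)
  have l2: "ln (1/y) \<le> 1/y - 1" using y0 by (intro ln_le_minus_one) auto
  have "1/y - 1 = - (2*x+1) / ((x+1)^2 + t^2)" using h0 h1 by (simp add: y_def field_simps power2_eq_square)
  moreover have "ln (1/y) = - ln y" using y0 by (simp add: ln_div)
  moreover have "- (2*x+1) / ((x+1)^2 + t^2) = - ((2*x+1) / ((x+1)^2 + t^2))" by (simp add: minus_divide_left)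
  ultimately have l3: "ln y \<ge> (2*x+1) / ((x+1)^2 + t^2)" using l2 by linarith
  have "2 * ln (1+u) \<le> 4/x^2 + ln y" using l1 l3 step_poly[OF assms, of t] unfolding u_def by linarith
  hence "exp (2 * ln (1+u)) \<le> exp (4/x^2 + ln y)" by simp
  moreover have "exp (2 * ln (1+u)) = (1+u)^2"
  proof -
    have "ln ((1+u)^2) = real 2 * ln (1+u)" using u0 by (intro ln_realpow)
    then have "2 * ln (1+u) = ln ((1+u)^2)" by simp
    then show ?thesis using u0 by simp
  qed
  moreover have "exp (4/x^2 + ln y) = exp (4/x^2) * y" using y0 by (simp add: exp_add)
  ultimately have "(1+u)^2 \<le> exp (4/x^2) * y" by simp
  then show ?thesis using g by (simp add: y_def)
qed

lemma sum_bound: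
  fixes s :: real assumes "s > 0"
  shows "(\<Sum>k\<le>n. 1 / (s + real k)^2) \<le> 1/s^2 + 1/s - 1/(s + real n)"
proof (induction n)
  case 0 then show ?case by simp
next
  case (Suc n)
  define y where "y = s + real n"
  have y0: "y > 0" using assms by (simp add: y_def)
  have "1 / (y+1)^2 \<le> 1 / (y * (y+1))"
    using y0 by (intro divide_left_mono) (auto simp: power2_eq_square)
  also have "\<dots> = 1/y - 1/(y+1)" using y0 by (simp add: field_simps)
  finally have "1 / (s + real (Suc n))^2 \<le> 1/(s + real n) - 1/(s + real (Suc n))"
    by (simp add: y_def add_ac)
  then show ?case using Suc by simp
qed

definition gq :: "real \<Rightarrow> real \<Rightarrow> real" where
  "gq t x = ((x+1/2)^2+t^2)/(x^2+t^2)"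

lemma prod_bound:
  fixes s t :: real assumes "s > 0"
  shows "(\<Prod>k\<le>n. gq t (s + real k))^2 \<le> exp (4 * (\<Sum>k\<le>n. 1 / (s + real k)^2)) * (((s+real n+1)^2+t^2)/(s^2+t^2))"
proof (induction n)
  case 0 then show ?case using step_ineq[OF assms, of t] by (simp add: gq_def)
next
  case (Suc n)
  define x where "x = s + real (Suc n)"
  have x0: "x > 0" using assms by (simp add: x_def)
  have hx: "x^2 + t^2 > 0" using x0 by (simp add: add_pos_nonneg)
  have hs: "s^2 + t^2 > 0" using assms by (simp add: add_pos_nonneg)
  have st: "gq t x ^ 2 \<le> exp (4/x^2) * (((x+1)^2+t^2)/(x^2+t^2))"
    using step_ineq[OF x0, of t] by (simp add: gq_def)
  have "(\<Prod>k\<le>Suc n. gq t (s + real k))^2 = (\<Prod>k\<le>n. gq t (s + real k))^2 * gq t x ^ 2"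
    by (simp add: x_def power_mult_distrib)
  also have "\<dots> \<le> (exp (4 * (\<Sum>k\<le>n. 1 / (s + real k)^2)) * (((s+real n+1)^2+t^2)/(s^2+t^2)))
       * (exp (4/x^2) * (((x+1)^2+t^2)/(x^2+t^2)))"
    by (intro mult_mono Suc st) (auto intro!: mult_nonneg_nonneg divide_nonneg_nonneg)
  also have "\<dots> = exp (4 * (\<Sum>k\<le>Suc n. 1 / (s + real k)^2)) * (((s+real (Suc n)+1)^2+t^2)/(s^2+t^2))"
  proof -
    have e: "exp (4 * (\<Sum>k\<le>Suc n. 1 / (s + real k)^2)) = exp (4 * (\<Sum>k\<le>n. 1 / (s + real k)^2)) * exp (4/x^2)"
      by (simp add: x_def distrib_left exp_add)
    have xx: "s+real n+1 = x" "s + real (Suc n) + 1 = x + 1" by (simp_all add: x_def)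
    have gen: "\<And>E1 E2 A B C::real. A \<noteq> 0 \<Longrightarrow> E1*(A/C)*(E2*(B/A)) = E1*E2*(B/C)" by (simp add: field_simps)
    show ?thesis unfolding e xx using hx by (intro gen) linarith
  qed
  finally show ?case .
qed



lemma poch_norm2:
  fixes a :: complex
  shows "norm (pochhammer a (Suc n)) ^ 2 = (\<Prod>k\<le>n. norm (a + of_nat k) ^ 2)"
proof -
  have "pochhammer a (Suc n) = (\<Prod>k\<le>n. a + of_nat k)"
    by (simp add: pochhammer_prod atLeast0LessThan lessThan_Suc_atMost)
  then have "norm (pochhammer a (Suc n)) = (\<Prod>k\<le>n. norm (a + of_nat k))"
    by (simp add: prod_norm)
  then show ?thesis by (simp add: prod_power_distrib)
qed

lemma ratio_norm:
  fixes z :: complex and n :: nat assumes "Re z > 0" "n \<ge> 1"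
  shows "norm (Gamma_series z n / Gamma_series (z + 1/2) n) ^ 4
         = (1 / real n ^ 2) * (\<Prod>k\<le>n. gq (Im z) (Re z + real k))^2"
proof -
  define w where "w = z + 1/2"
  define L where "L = ln (real n)"
  have zn: "z \<noteq> - of_nat k" for k :: nat
  proof
    assume "z = - of_nat k" then have "Re z = - real k" by simp
    with assms show False by simp
  qed
  have wn: "w \<noteq> - of_nat k" for k :: nat
  proof
    assume "w = - of_nat k" then have "Re w = Re (- of_nat k :: complex)" by simp
    then have "Re z + 1/2 = - real k" by (simp add: w_def)
    with assms show False by linarith
  qed
  have pz: "pochhammer z (n+1) \<noteq> 0" using zn by (simp add: pochhammer_eq_0_iff)
  have pw: "pochhammer w (n+1) \<noteq> 0" using wn by (simp add: pochhammer_eq_0_iff)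
  have r: "Gamma_series z n / Gamma_series w n
        = (exp (z * of_real L) / exp (w * of_real L)) * (pochhammer w (n+1) / pochhammer z (n+1))"
    unfolding Gamma_series_def L_def using pz pw by (simp add: field_simps)
  have e: "norm (exp (z * of_real L) / exp (w * of_real L)) = exp (- L / 2)"
    by (simp add: norm_divide w_def exp_diff[symmetric] field_simps)
  have e4: "exp (- L / 2) ^ 4 = 1 / real n ^ 2"
  proof -
    have a: "exp (- L / 2) ^ 2 = exp (- L)" by (simp add: power2_eq_square exp_add[symmetric])
    have b: "exp (- L) = 1 / real n" using assms by (simp add: L_def exp_minus divide_inverse)
    have "exp (- L / 2) ^ 4 = (exp (- L / 2) ^ 2) ^ 2" by (simp flip: power_mult)
    then show ?thesis unfolding a b by (simp add: power_divide)
  qed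
  have p: "norm (pochhammer w (n+1) / pochhammer z (n+1)) ^ 2 = (\<Prod>k\<le>n. gq (Im z) (Re z + real k))"
  proof -
    have "norm (pochhammer w (n+1) / pochhammer z (n+1)) ^ 2
          = (\<Prod>k\<le>n. norm (w + of_nat k) ^ 2 / norm (z + of_nat k) ^ 2)"
      by (simp only: norm_divide power_divide Suc_eq_plus1[symmetric] poch_norm2 prod_dividef)
    also have "\<dots> = (\<Prod>k\<le>n. gq (Im z) (Re z + real k))"
      by (intro prod.cong refl) (simp add: cmod_power2 gq_def w_def add_ac)
    finally show ?thesis .
  qed
  have "norm (Gamma_series z n / Gamma_series w n) ^ 4
        = exp (- L / 2) ^ 4 * (norm (pochhammer w (n+1) / pochhammer z (n+1)) ^ 2) ^ 2"
    unfolding r norm_mult e by (simp add: power_mult_distrib flip: power_mult)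
  then have "norm (Gamma_series z n / Gamma_series w n) ^ 4 = (1 / real n ^ 2) * (\<Prod>k\<le>n. gq (Im z) (Re z + real k))^2"
    unfolding e4 p .
  then show ?thesis by (simp add: w_def)
qed

lemma q_bound:
  fixes z :: complex assumes z: "Re z > 0"
  shows "norm (Gamma z / Gamma (z + 1/2)) ^ 4 \<le> exp (4*(1/Re z^2 + 1/Re z)) / norm z ^ 2"
proof -
  define s where "s = Re z"
  define t where "t = Im z"
  define C where "C = 1/s^2 + 1/s"
  have s0: "s > 0" using z by (simp add: s_def)
  have hs: "s^2 + t^2 > 0" using s0 by (simp add: add_pos_nonneg)
  have nz: "norm z ^ 2 = s^2 + t^2" by (simp add: cmod_power2 s_def t_def)
  have nonpos: "z \<notin> \<int>\<^sub>\<le>\<^sub>0" "z + 1/2 \<notin> \<int>\<^sub>\<le>\<^sub>0"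
    using z by (auto elim!: nonpos_Ints_cases simp: complex_eq_iff)
  have G0: "Gamma (z + 1/2) \<noteq> 0" using nonpos by (simp add: Gamma_eq_zero_iff)
  have lim1: "(\<lambda>n. norm (Gamma_series z n / Gamma_series (z + 1/2) n) ^ 4)
               \<longlonglongrightarrow> norm (Gamma z / Gamma (z + 1/2)) ^ 4"
    by (intro tendsto_intros G0)
  have lim2: "(\<lambda>n. exp (4*C) * (((s+real n+1)^2+t^2)/(s^2+t^2)) / real n ^ 2)
               \<longlonglongrightarrow> exp (4*C) / (s^2+t^2)"
  proof -
    have "(\<lambda>n. exp (4*C) / (s^2+t^2) * ((1 + (s+1) / real n)^2 + t^2 * (1 / real n)^2))
          \<longlonglongrightarrow> exp (4*C) / (s^2+t^2) * ((1 + 0)^2 + t^2 * 0^2)"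
      by (intro tendsto_intros lim_const_over_n lim_inverse_n')
    then have "(\<lambda>n. exp (4*C) / (s^2+t^2) * ((1 + (s+1) / real n)^2 + t^2 * (1 / real n)^2))
          \<longlonglongrightarrow> exp (4*C) / (s^2+t^2)" by simp
    moreover have "eventually (\<lambda>n. exp (4*C) / (s^2+t^2) * ((1 + (s+1) / real n)^2 + t^2 * (1 / real n)^2)
          = exp (4*C) * (((s+real n+1)^2+t^2)/(s^2+t^2)) / real n ^ 2) sequentially"
      using eventually_gt_at_top[of 0]
      by eventually_elim (simp add: field_simps power2_eq_square)
    ultimately show ?thesis by (rule Lim_transform_eventually)
  qed
  have ev: "eventually (\<lambda>n. norm (Gamma_series z n / Gamma_series (z + 1/2) n) ^ 4
               \<le> exp (4*C) * (((s+real n+1)^2+t^2)/(s^2+t^2)) / real n ^ 2) sequentially"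
    using eventually_ge_at_top[of 1]
  proof eventually_elim
    case (elim n)
    have "norm (Gamma_series z n / Gamma_series (z + 1/2) n) ^ 4
          = (1 / real n ^ 2) * (\<Prod>k\<le>n. gq t (s + real k))^2"
      using ratio_norm[OF z elim] by (simp add: s_def t_def)
    also have "\<dots> \<le> (1 / real n ^ 2) * (exp (4 * (\<Sum>k\<le>n. 1 / (s + real k)^2)) * (((s+real n+1)^2+t^2)/(s^2+t^2)))"
      by (intro mult_left_mono prod_bound s0) auto
    also have "\<dots> \<le> (1 / real n ^ 2) * (exp (4 * C) * (((s+real n+1)^2+t^2)/(s^2+t^2)))"
    proof -
      have "(\<Sum>k\<le>n. 1 / (s + real k)^2) \<le> C"
      proof -
        have "1/(s+real n) \<ge> 0" using s0 by simp
        then show ?thesis using sum_bound[OF s0, of n] unfolding C_def by linarith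
      qed
      then show ?thesis using hs
        by (intro mult_left_mono mult_right_mono) (auto intro!: divide_nonneg_nonneg add_nonneg_nonneg)
    qed
    finally show ?case by (simp add: mult.commute)
  qed
  have "norm (Gamma z / Gamma (z + 1/2)) ^ 4 \<le> exp (4*C) / (s^2+t^2)"
    by (rule tendsto_le[OF _ lim2 lim1 ev]) simp
  then show ?thesis by (simp add: nz C_def s_def)
qed



lemma q_bound2:
  fixes z :: complex assumes z: "Re z > 0"
  shows "norm (Gamma z / Gamma (z + 1/2)) ^ 2 \<le> exp (2*(1/Re z^2 + 1/Re z)) / norm z"
proof -
  have nz: "norm z > 0" using z by auto
  have "(norm (Gamma z / Gamma (z + 1/2)) ^ 2) ^ 2 \<le> (exp (2*(1/Re z^2 + 1/Re z)) / norm z) ^ 2"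
  proof -
    have sq4: "\<And>x::real. (x^2)^2 = x^4" by simp
    have "(norm (Gamma z / Gamma (z + 1/2)) ^ 2) ^ 2 = norm (Gamma z / Gamma (z + 1/2)) ^ 4"
      using sq4 .
    also have "\<dots> \<le> exp (4*(1/Re z^2 + 1/Re z)) / norm z ^ 2" by (rule q_bound[OF z])
    also have "\<dots> = (exp (2*(1/Re z^2 + 1/Re z)) / norm z) ^ 2"
    proof -
      have a: "\<And>c::real. exp (2*c) ^ 2 = exp (4*c)"
        by (subst exp_of_nat_mult[symmetric]) simp
      show ?thesis unfolding power_divide a ..
    qed
    finally show ?thesis .
  qed
  moreover have "0 \<le> exp (2*(1/Re z^2 + 1/Re z)) / norm z" using nz by simp
  ultimately show ?thesis by (rule power2_le_imp_le)
qed

lemma beta_bound: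
  fixes z :: complex assumes z: "Re z > 0"
  shows "norm (Beta z z ^ 2) \<le> 4 * pi * exp (2*(1/Re z^2 + 1/Re z)) * exp (- (4 * ln 2) * Re z) / norm z"
proof -
  have np: "z \<notin> \<int>\<^sub>\<le>\<^sub>0" "z + 1/2 \<notin> \<int>\<^sub>\<le>\<^sub>0" "2 * z \<notin> \<int>\<^sub>\<le>\<^sub>0"
    using z by (auto elim!: nonpos_Ints_cases simp: complex_eq_iff)
  have G: "Gamma z \<noteq> 0" "Gamma (z + 1/2) \<noteq> 0" "Gamma (2 * z) \<noteq> 0"
    using np by (simp_all only: Gamma_eq_zero_iff not_False_eq_True)
  define E where "E = exp ((1 - 2*z) * of_real (ln 2))"
  have dup: "Gamma z * Gamma (z + 1/2) = E * of_real (sqrt pi) * Gamma (2*z)"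
    unfolding E_def by (rule Gamma_legendre_duplication[OF np(1,2)])
  define gz where "gz = Gamma z"
  define gh where "gh = Gamma (z + 1/2)"
  define g2 where "g2 = Gamma (2 * z)"
  define sp where "sp = (of_real (sqrt pi) :: complex)"
  have E0: "E \<noteq> 0" by (simp add: E_def)
  have sp0: "sp \<noteq> 0" by (simp add: sp_def)
  have dup': "gz * gh = E * sp * g2" using dup unfolding gz_def gh_def g2_def sp_def .
  have Bd: "Beta z z = gz * gz / g2"
  proof -
    have "z + z = 2 * z" by simp
    then show ?thesis unfolding Beta_def gz_def g2_def by simp
  qed
  have B: "Beta z z = (gz / gh) * (E * sp)"
  proof -
    have "gz * gz / g2 = (gz / gh) * (E * sp)"
      using G[folded gz_def gh_def g2_def] E0 sp0 dup' by (simp add: field_simps)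
    then show ?thesis using Bd by simp
  qed
  have nE: "norm E ^ 2 = 4 * exp (- (4 * ln 2) * Re z)"
  proof -
    have "norm E = exp ((1 - 2 * Re z) * ln 2)" by (simp add: E_def)
    moreover have "exp (2 * ((1 - 2 * Re z) * ln 2)) = exp ((1 - 2 * Re z) * ln 2) ^ 2"
    proof -
      have a: "2 * ((1 - 2 * Re z) * ln 2) = (1 - 2 * Re z) * ln 2 + (1 - 2 * Re z) * ln 2" by simp
      show ?thesis by (simp only: a exp_add power2_eq_square)
    qed
    ultimately have "norm E ^ 2 = exp (2 * ((1 - 2 * Re z) * ln 2))" by simp
    also have "2 * ((1 - 2 * Re z) * ln 2) = ln 2 + ln 2 + (- (4 * ln 2) * Re z)" by (simp add: algebra_simps)
    also have "exp \<dots> = 4 * exp (- (4 * ln 2) * Re z)"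
    proof -
      have "exp (ln 2 + ln 2 + (- (4 * ln 2) * Re z)) = exp (ln 2) * exp (ln 2) * exp (- (4 * ln 2) * Re z)"
        by (simp only: exp_add)
      then show ?thesis by simp
    qed
    finally show ?thesis .
  qed
  have "norm (Beta z z ^ 2) = norm (gz / gh) ^ 2 * (norm E ^ 2 * pi)"
  proof -
    have "norm sp ^ 2 = pi" by (simp add: sp_def)
    then show ?thesis unfolding B by (simp only: norm_power norm_mult power_mult_distrib)
  qed
  also have "\<dots> \<le> (exp (2*(1/Re z^2 + 1/Re z)) / norm z) * (norm E ^ 2 * pi)"
    by (intro mult_right_mono q_bound2[OF z, folded gz_def gh_def]) simp
  also have "\<dots> = 4 * pi * exp (2*(1/Re z^2 + 1/Re z)) * exp (- (4 * ln 2) * Re z) / norm z"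
    unfolding nE by simp
  finally show ?thesis .
qed



lemma line_ftc:
  fixes F f :: "complex \<Rightarrow> complex"
  assumes deriv: "\<And>z. z \<in> H \<Longrightarrow> (F has_field_derivative f z) (at z)"
    and uv: "u \<le> v" and inH: "\<And>s. s \<in> {u..v} \<Longrightarrow> p0 + of_real s * d \<in> H"
  shows "((\<lambda>s. f (p0 + of_real s * d) * d) has_integral (F (p0 + of_real v * d) - F (p0 + of_real u * d))) {u..v}"
proof -
  have "((\<lambda>s. F (p0 + of_real s * d)) has_vector_derivative (f (p0 + of_real s * d) * d)) (at s within {u..v})"
    if s: "s \<in> {u..v}" for s
  proof -
    have g: "((\<lambda>w. p0 + w * d) has_field_derivative d) (at (of_real s))"
      by (auto intro!: derivative_eq_intros)
    have "((\<lambda>w. F (p0 + w * d)) has_field_derivative f (p0 + of_real s * d) * d) (at (of_real s))"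
      using DERIV_chain'[OF g deriv[OF inH[OF s]]] .
    then show ?thesis by (rule has_vector_derivative_real_field)
  qed
  then show ?thesis by (intro fundamental_theorem_of_calculus uv)
qed

lemma exp_integral:
  fixes c K a A :: real
  assumes "c > 0" "a \<le> A"
  shows "((\<lambda>s. K * exp (- c * s)) has_integral (K / c) * (exp (- c * a) - exp (- c * A))) {a..A}"
proof -
  have "((\<lambda>s. - (K / c) * exp (- c * s)) has_vector_derivative K * exp (- c * s)) (at s within {a..A})" for s
  proof -
    have "((\<lambda>s. - (K / c) * exp (- c * s)) has_real_derivative - (K / c) * (exp (- c * s) * (- c))) (at s within {a..A})"
      by (auto intro!: derivative_eq_intros)
    moreover have "- (K / c) * (exp (- c * s) * (- c)) = K * exp (- c * s)" using assms by simp
    ultimately show ?thesis by (simp add: has_real_derivative_iff_has_vector_derivative)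
  qed
  then have "((\<lambda>s. K * exp (- c * s)) has_integral (- (K / c) * exp (- c * A) - - (K / c) * exp (- c * a))) {a..A}"
    by (intro fundamental_theorem_of_calculus assms)
  moreover have "- (K / c) * exp (- c * A) - - (K / c) * exp (- c * a) = (K / c) * (exp (- c * a) - exp (- c * A))"
    by (simp add: algebra_simps)
  ultimately show ?thesis by simp
qed


lemma main_abstract:
  fixes f F :: "complex \<Rightarrow> complex" and a M c :: real
  assumes a: "a > 0" and c: "c > 0" and M: "M \<ge> 0"
    and deriv: "\<And>z. z \<in> {z. Re z > 0} \<Longrightarrow> (F has_field_derivative f z) (at z)"
    and bound: "\<And>z. Re z \<ge> a \<Longrightarrow> norm (f z) \<le> M * exp (- c * Re z) / norm z"
  shows "(\<forall>S R. (\<lambda>x::real. f (Complex a (- x)) * (- \<i>)) integrable_on {-S..R})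
       \<and> ((\<lambda>(S, R). integral {-S..R} (\<lambda>x::real. f (Complex a (- x)) * (- \<i>)))
            \<longlongrightarrow> (0::complex)) (at_top \<times>\<^sub>F at_top)"
proof -
  have cx: "\<And>x. of_real a + of_real x * (-\<i>) = Complex a (-x)" by (simp add: complex_eq_iff)
  have vert: "((\<lambda>x. f (Complex a (-x)) * (-\<i>)) has_integral (F (Complex a (-R)) - F (Complex a S))) {-S..R}"
    if "-S \<le> R" for S R
  proof -
    have "((\<lambda>x. f (of_real a + of_real x * (-\<i>)) * (-\<i>)) has_integral
           (F (of_real a + of_real R * (-\<i>)) - F (of_real a + of_real (-S) * (-\<i>)))) {-S..R}"
      by (rule line_ftc[where H="{z. Re z > 0}", OF deriv that]) (use a in auto)
    then show ?thesis unfolding cx by simp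
  qed
  have integ: "\<forall>S R. (\<lambda>x::real. f (Complex a (- x)) * (- \<i>)) integrable_on {-S..R}"
  proof (intro allI)
    fix S R :: real
    show "(\<lambda>x::real. f (Complex a (- x)) * (- \<i>)) integrable_on {-S..R}"
    proof (cases "-S \<le> R")
      case True then show ?thesis using vert[OF True] by blast
    next
      case False then have "{-S..R} = {}" by simp
      then show ?thesis by (simp only: integrable_on_empty)
    qed
  qed
  have hb: "norm (F (Complex A T) - F (Complex a T)) \<le> M / (c * \<bar>T\<bar>)" if T: "\<bar>T\<bar> \<ge> 1" and A: "a \<le> A" for T A
  proof -
    have cT: "\<And>s. of_real T * \<i> + of_real s * 1 = Complex s T" by (simp add: complex_eq_iff)
    have hi0: "((\<lambda>s. f (of_real T * \<i> + of_real s * 1) * 1) has_integral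
           (F (of_real T * \<i> + of_real A * 1) - F (of_real T * \<i> + of_real a * 1))) {a..A}"
      by (rule line_ftc[where H="{z. Re z > 0}", OF deriv A]) (use a in \<open>auto\<close>)
    have hi: "((\<lambda>s. f (Complex s T)) has_integral (F (Complex A T) - F (Complex a T))) {a..A}"
      using hi0 unfolding cT by simp
    have ei: "((\<lambda>s. (M / \<bar>T\<bar>) * exp (- c * s)) has_integral (M / \<bar>T\<bar> / c) * (exp (- c * a) - exp (- c * A))) {a..A}"
      by (rule exp_integral[OF c A])
    have pw: "norm (f (Complex s T)) \<le> (M / \<bar>T\<bar>) * exp (- c * s)" if s: "s \<in> {a..A}" for s
    proof -
      have "norm (f (Complex s T)) \<le> M * exp (- c * s) / norm (Complex s T)"
        using bound[of "Complex s T"] s by simp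
      also have "\<dots> \<le> M * exp (- c * s) / \<bar>T\<bar>"
      proof (rule divide_left_mono)
        show le: "\<bar>T\<bar> \<le> norm (Complex s T)" using abs_Im_le_cmod[of "Complex s T"] by simp
        show "0 \<le> M * exp (- c * s)" using M by simp
        show "0 < norm (Complex s T) * \<bar>T\<bar>" using le T by (intro mult_pos_pos) auto
      qed
      finally show ?thesis by simp
    qed
    have "norm (integral {a..A} (\<lambda>s. f (Complex s T))) \<le> integral {a..A} (\<lambda>s. (M / \<bar>T\<bar>) * exp (- c * s))"
      by (rule integral_norm_bound_integral) (use hi ei pw in blast)+
    then have "norm (F (Complex A T) - F (Complex a T)) \<le> (M / \<bar>T\<bar> / c) * (exp (- c * a) - exp (- c * A))"
      using integral_unique[OF hi] integral_unique[OF ei] by simp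
    also have "\<dots> \<le> (M / \<bar>T\<bar> / c) * 1"
    proof (rule mult_left_mono)
      have "exp (- c * a) \<le> 1" using a c by simp
      moreover have "exp (- c * A) \<ge> 0" by simp
      ultimately show "exp (- c * a) - exp (- c * A) \<le> 1" by linarith
    qed (use M c in simp)
    finally show ?thesis by (simp add: field_simps)
  qed
  have vb: "norm (F (Complex A S) - F (Complex A (-R))) \<le> M * exp (- c * A) / A * (S + R)"
    if S: "S \<ge> 0" and R: "R \<ge> 0" and A: "a \<le> A" for S R A
  proof -
    have A0: "A > 0" using a A by simp
    have cV: "\<And>s. of_real A + of_real s * \<i> = Complex A s" by (simp add: complex_eq_iff)
    have uv: "-R \<le> S" using S R by simp
    have hi0: "((\<lambda>s. f (of_real A + of_real s * \<i>) * \<i>) has_integral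
           (F (of_real A + of_real S * \<i>) - F (of_real A + of_real (-R) * \<i>))) {-R..S}"
      by (rule line_ftc[where H="{z. Re z > 0}", OF deriv uv]) (use A0 in \<open>auto\<close>)
    have hi: "((\<lambda>s. f (Complex A s) * \<i>) has_integral (F (Complex A S) - F (Complex A (-R)))) {-R..S}"
      using hi0 unfolding cV by simp
    have "norm (F (Complex A S) - F (Complex A (-R))) \<le> (M * exp (- c * A) / A) * Henstock_Kurzweil_Integration.content {-R..S}"
    proof (rule has_integral_bound_real[where S="{}", OF _ _ hi])
      show "0 \<le> M * exp (- c * A) / A" using M A0 by simp
      fix s assume "s \<in> {-R..S} - {}"
      have "norm (f (Complex A s) * \<i>) = norm (f (Complex A s))" by (simp add: norm_mult)
      also have "\<dots> \<le> M * exp (- c * A) / norm (Complex A s)" using bound[of "Complex A s"] A by simp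
      also have "\<dots> \<le> M * exp (- c * A) / A"
      proof (rule divide_left_mono)
        show le: "A \<le> norm (Complex A s)" using abs_Re_le_cmod[of "Complex A s"] A0 by simp
        show "0 \<le> M * exp (- c * A)" using M by simp
        show "0 < norm (Complex A s) * A" using le A0 by (intro mult_pos_pos) auto
      qed
      finally show "norm (f (Complex A s) * \<i>) \<le> M * exp (- c * A) / A" .
    qed simp
    also have "Henstock_Kurzweil_Integration.content {-R..S} = S + R" using uv by simp
    finally show ?thesis .
  qed
  have key: "norm (F (Complex a (-R)) - F (Complex a S)) \<le> M / c * inverse S + 2 * (M / c) * inverse R"
    if S: "S \<ge> 1" and R: "R \<ge> 1" for S R
  proof -
    define A where "A = a + S + R"
    have aA: "a \<le> A" using S R by (simp add: A_def)
    have A0: "A > 0" using a S R by (simp add: A_def)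
    have eq: "F (Complex a (-R)) - F (Complex a S)
      = (F (Complex A S) - F (Complex a S)) - (F (Complex A (-R)) - F (Complex a (-R)))
        - (F (Complex A S) - F (Complex A (-R)))" by (simp add: algebra_simps)
    have "norm (F (Complex a (-R)) - F (Complex a S))
      \<le> norm (F (Complex A S) - F (Complex a S)) + norm (F (Complex A (-R)) - F (Complex a (-R)))
        + norm (F (Complex A S) - F (Complex A (-R)))"
      unfolding eq by (rule order.trans[OF norm_triangle_ineq4 add_right_mono[OF norm_triangle_ineq4]])
    also have "\<dots> \<le> M / (c * \<bar>S\<bar>) + M / (c * \<bar>-R\<bar>) + M * exp (- c * A) / A * (S + R)"
      by (intro add_mono hb vb aA) (use S R in auto)
    also have "M * exp (- c * A) / A * (S + R) \<le> M / (c * R)"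
    proof -
      have e1: "exp (c * A) \<ge> c * A" using exp_ge_add_one_self[of "c * A"] by linarith
      have cA: "c * A > 0" using c A0 by simp
      have e2: "exp (- c * A) \<le> 1 / (c * A)"
      proof -
        have "exp (- c * A) = 1 / exp (c * A)" by (simp add: exp_minus')
        also have "\<dots> \<le> 1 / (c * A)" using e1 cA by (intro divide_left_mono) auto
        finally show ?thesis .
      qed
      have "M * exp (- c * A) / A * (S + R) = M * exp (- c * A) * ((S + R) / A)" by simp
      also have "\<dots> \<le> M * exp (- c * A) * 1"
        using M A0 aA a by (intro mult_left_mono) (auto simp: A_def)
      also have "\<dots> \<le> M * (1 / (c * A))" using mult_left_mono[OF e2 M] by simp
      also have "\<dots> \<le> M * (1 / (c * R))"
        using M c R A0 S a by (intro mult_left_mono divide_left_mono) (auto simp: A_def intro!: mult_left_mono)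
      finally show ?thesis by simp
    qed
    also have "M / (c * \<bar>S\<bar>) + M / (c * \<bar>-R\<bar>) + M / (c * R) = M / c * inverse S + 2 * (M / c) * inverse R"
      using S R by (simp add: field_simps)
    finally show ?thesis by simp
  qed
  have lim: "((\<lambda>(S, R). integral {-S..R} (\<lambda>x::real. f (Complex a (- x)) * (- \<i>)))
            \<longlongrightarrow> (0::complex)) (at_top \<times>\<^sub>F at_top)"
  proof (rule Lim_null_comparison)
    show "eventually (\<lambda>p. norm (case p of (S, R) \<Rightarrow> integral {-S..R} (\<lambda>x::real. f (Complex a (- x)) * (- \<i>)))
            \<le> M / c * inverse (fst p) + 2 * (M / c) * inverse (snd p)) (at_top \<times>\<^sub>F at_top)"
      unfolding eventually_prod_filter
    proof (intro exI conjI allI impI)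
      show "eventually (\<lambda>S::real. S \<ge> 1) at_top" by (rule eventually_ge_at_top)
      show "eventually (\<lambda>S::real. S \<ge> 1) at_top" by (rule eventually_ge_at_top)
      fix S R :: real assume S: "S \<ge> 1" and R: "R \<ge> 1"
      have "-S \<le> R" using S R by simp
      then have "integral {-S..R} (\<lambda>x::real. f (Complex a (- x)) * (- \<i>)) = F (Complex a (-R)) - F (Complex a S)"
        by (rule integral_unique[OF vert])
      then show "norm (case (S, R) of (S, R) \<Rightarrow> integral {-S..R} (\<lambda>x::real. f (Complex a (- x)) * (- \<i>)))
            \<le> M / c * inverse (fst (S, R)) + 2 * (M / c) * inverse (snd (S, R))"
        using key[OF S R] by simp
    qed
    have f1: "((\<lambda>p::real\<times>real. inverse (fst p)) \<longlongrightarrow> 0) (at_top \<times>\<^sub>F at_top)"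
      by (intro tendsto_inverse_0_at_top filterlim_fst)
    have f2: "((\<lambda>p::real\<times>real. inverse (snd p)) \<longlongrightarrow> 0) (at_top \<times>\<^sub>F at_top)"
      by (intro tendsto_inverse_0_at_top filterlim_snd)
    have "((\<lambda>p::real\<times>real. M / c * inverse (fst p) + 2 * (M / c) * inverse (snd p)) \<longlongrightarrow> M / c * 0 + 2 * (M / c) * 0) (at_top \<times>\<^sub>F at_top)"
      by (intro tendsto_intros f1 f2)
    then show "((\<lambda>p::real\<times>real. M / c * inverse (fst p) + 2 * (M / c) * inverse (snd p)) \<longlongrightarrow> 0) (at_top \<times>\<^sub>F at_top)"
      by simp
  qed
  show ?thesis using integ lim by blast
qed


lemma Re_pos_not_nonpos: "Re (z::complex) > 0 \<Longrightarrow> z \<notin> \<int>\<^sub>\<le>\<^sub>0"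
  by (auto elim!: nonpos_Ints_cases simp: complex_eq_iff)

lemma f_bound:
  fixes z :: complex and a :: real
  assumes a: "a > 0" and z: "Re z \<ge> a"
  shows "norm (Beta z z ^ 2) \<le> (4 * pi * exp (2*(1/a^2 + 1/a))) * exp (- (4 * ln 2) * Re z) / norm z"
proof -
  define X where "X = norm (Beta z z ^ 2)"
  have z0: "Re z > 0" using a z by simp
  have nz: "norm z > 0" using z0 by auto
  have X: "X \<le> 4 * pi * exp (2*(1/Re z^2 + 1/Re z)) * exp (- (4 * ln 2) * Re z) / norm z"
    unfolding X_def by (rule beta_bound[OF z0])
  have "1/Re z^2 \<le> 1/a^2" using a z by (intro divide_left_mono power_mono) auto
  moreover have "1/Re z \<le> 1/a" using a z by (intro divide_left_mono) auto
  ultimately have "exp (2*(1/Re z^2 + 1/Re z)) \<le> exp (2*(1/a^2 + 1/a))" by simp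
  then have "4 * pi * exp (2*(1/Re z^2 + 1/Re z)) * exp (- (4 * ln 2) * Re z) / norm z
     \<le> 4 * pi * exp (2*(1/a^2 + 1/a)) * exp (- (4 * ln 2) * Re z) / norm z"
    using nz by (intro divide_right_mono mult_right_mono mult_left_mono) auto
  with X show ?thesis unfolding X_def by linarith
qed

theorem lemma9p2:
  fixes a :: real
  assumes "a > 0"
  shows "(\<forall>S R. (\<lambda>x::real. Beta (Complex a (- x)) (Complex a (- x)) ^ 2 * (- \<i>))
                     integrable_on {-S..R})
       \<and> ((\<lambda>(S, R). integral {-S..R}
              (\<lambda>x::real. Beta (Complex a (- x)) (Complex a (- x)) ^ 2 * (- \<i>)))
            \<longlongrightarrow> (0::complex)) (at_top \<times>\<^sub>F at_top)"
proof -
  have hol: "(\<lambda>z. Beta z z ^ 2) holomorphic_on {z. Re z > 0}"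
    by (intro holomorphic_intros) (use Re_pos_not_nonpos in blast)+
  obtain F where F: "\<And>x. x \<in> {z. Re z > 0} \<Longrightarrow> (F has_field_derivative (Beta x x ^ 2)) (at x within {z. Re z > 0})"
    using holomorphic_convex_primitive'[OF convex_halfspace_Re_gt open_halfspace_Re_gt hol] by blast
  have deriv: "\<And>x. x \<in> {z. Re z > 0} \<Longrightarrow> (F has_field_derivative (Beta x x ^ 2)) (at x)"
    using F at_within_open[OF _ open_halfspace_Re_gt] by metis
  have c: "4 * ln (2::real) > 0" by simp
  have M: "4 * pi * exp (2*(1/a^2 + 1/a)) \<ge> 0" by simp
  show ?thesis
    by (rule main_abstract[where f="\<lambda>z. Beta z z ^ 2", OF assms c M deriv f_bound[OF assms]])
qed

end
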